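(* Fix $\theta$ and $Q\in\{0,1\}$. The function $\tau\mapsto u(s_1(\theta,\tau))$ has a discontinuity in $(-x_u,x_q)$ if and only if $\phi(\theta)<\beta$. The function $\tau\mapsto u(s_2(\theta,\tau))$ has a discontinuity in $(-x_u,x_q)$ for every $\theta$.
   Context: Setup. Let $Q\in\{0,1\}$ be a random variable with $\mathbb P(Q=1)=\pi\in(0,1)$, and let $(\Theta,\Gamma)$ be a real-valued random vector whose conditional joint density given $Q=1$ is $h_q$ and given $Q=0$ is $h_u$, both strictly positive on $\mathbb R^2$. Monotone likelihood ratio assumption: $l(\theta,\gamma)=h_q(\theta,\gamma)/h_u(\theta,\gamma)$ is continuous and strictly increasing in each of $\theta$ and $\gamma$, and for each $\theta$ the map $\gamma\mapsto l(\theta,\gamma)$ has infimum $0$ and supremum $+\infty$. Fix payoffs $x_q>0$, $x_u>0$. For $\tau\in(-x_u,x_q)$ let $A(\tau)=\mathbb 1\{l(\Theta,\Gamma)>\frac{(1-\pi)(x_u+\tau)}{\pi(x_q-\tau)}\}$, $s_1(\theta,\tau)=\mathbb E[Q\mid\Theta=\theta,A(\tau)=1]$, $s_2(\theta,\tau)=\mathbb E[A(\tau)\mid\Theta=\theta]$, $\phi(\theta)=\mathbb P(Q=1\mid\Theta=\theta)$. Regret. Fix a cutoff $c\in(-x_u,x_q)$ and let $\beta=(x_u+c)/(x_q+x_u)\in(0,1)$. For a score value $s\in[0,1]$ and a qualification value $Q\in\{0,1\}$ define $\mathcal N(s)=sx_q-(1-s)x_u$, $A'(s)=\mathbb 1\{\mathcal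 N(s)>c\}$ (i.e. $s>\beta$), $\mathcal P(s)=A'(s)(Qx_q-(1-Q)x_u)$, and the individual regret $u(s)=\mathcal N(s)-\mathcal P(s)$. For a fixed applicant $(\theta,Q)$, $u(s_k(\theta,\tau))$ is viewed as a function of $\tau\in(-x_u,x_q)$. *)

theory Defs
  imports "HOL-Analysis.Analysis"
begin

definition lr :: "(real \<times> real \<Rightarrow> real) \<Rightarrow> (real \<times> real \<Rightarrow> real) \<Rightarrow> real \<times> real \<Rightarrow> real" where
  "lr hq hu p = hq p / hu p"

text \<open>Acceptance threshold on the likelihood ratio for the policy A(tau).\<close>
definition thr :: "real \<Rightarrow> real \<Rightarrow> real \<Rightarrow> real \<Rightarrow> real" where
  "thr pq xq xu t = (1 - pq) * (xu + t) / (pq * (xq - t))"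

definition acc_mass :: "(real \<times> real \<Rightarrow> real) \<Rightarrow> (real \<times> real \<Rightarrow> real) \<Rightarrow> real \<Rightarrow> real \<Rightarrow> real" where
  "acc_mass h l k theta = (\<integral>g. indicator {g. l (theta, g) > k} g * h (theta, g) \<partial>lborel)"

definition marg :: "(real \<times> real \<Rightarrow> real) \<Rightarrow> real \<Rightarrow> real" where
  "marg h theta = (\<integral>g. h (theta, g) \<partial>lborel)"

text \<open>phi(theta) = P(Q = 1 | Theta = theta), by Bayes' rule.\<close>
definition phi :: "real \<Rightarrow> (real \<times> real \<Rightarrow> real) \<Rightarrow> (real \<times> real \<Rightarrow> real) \<Rightarrow> real \<Rightarrow> real" where
  "phi pq hq hu theta = pq * marg hq theta / (pq * marg hq theta + (1 - pq) * marg hu theta)"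

text \<open>s_1(theta,tau) = E[Q | Theta = theta, A(tau) = 1].\<close>
definition s1 :: "real \<Rightarrow> (real \<times> real \<Rightarrow> real) \<Rightarrow> (real \<times> real \<Rightarrow> real) \<Rightarrow> real \<Rightarrow> real \<Rightarrow> real \<Rightarrow> real \<Rightarrow> real" where
  "s1 pq hq hu xq xu theta t =
     (let k = thr pq xq xu t;
          a = pq * acc_mass hq (lr hq hu) k theta;
          b = (1 - pq) * acc_mass hu (lr hq hu) k theta
      in a / (a + b))"

text \<open>s_2(theta,tau) = E[A(tau) | Theta = theta].\<close>
definition s2 :: "real \<Rightarrow> (real \<times> real \<Rightarrow> real) \<Rightarrow> (real \<times> real \<Rightarrow> real) \<Rightarrow> real \<Rightarrow> real \<Rightarrow> real \<Rightarrow> real \<Rightarrow> real" where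
  "s2 pq hq hu xq xu theta t =
     (let k = thr pq xq xu t;
          a = pq * acc_mass hq (lr hq hu) k theta;
          b = (1 - pq) * acc_mass hu (lr hq hu) k theta
      in (a + b) / (pq * marg hq theta + (1 - pq) * marg hu theta))"

definition beta :: "real \<Rightarrow> real \<Rightarrow> real \<Rightarrow> real" where
  "beta xq xu c = (xu + c) / (xq + xu)"

definition netv :: "real \<Rightarrow> real \<Rightarrow> real \<Rightarrow> real" where
  "netv xq xu s = s * xq - (1 - s) * xu"

definition accept' :: "real \<Rightarrow> real \<Rightarrow> real \<Rightarrow> real \<Rightarrow> real" where
  "accept' xq xu c s = (if netv xq xu s > c then 1 else 0)"

definition payoff :: "real \<Rightarrow> real \<Rightarrow> real \<Rightarrow> real \<Rightarrow> real \<Rightarrow> real" where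
  "payoff xq xu c Q s = accept' xq xu c s * (Q * xq - (1 - Q) * xu)"

definition regret :: "real \<Rightarrow> real \<Rightarrow> real \<Rightarrow> real \<Rightarrow> real \<Rightarrow> real" where
  "regret xq xu c Q s = netv xq xu s - payoff xq xu c Q s"

end

theory Submission imports Defs begin

definition AM :: "(real \<Rightarrow> real) \<Rightarrow> (real \<Rightarrow> real) \<Rightarrow> real \<Rightarrow> real" where
  "AM L F k = (\<integral>g. indicator {g. L g > k} g * F g \<partial>lborel)"

lemma up_sets: "strict_mono (L::real\<Rightarrow>real) \<Longrightarrow> {g. L g > k} \<in> sets borel"
proof -
  assume "strict_mono L"
  then have "L \<in> borel_measurable borel"
    by (intro borel_measurable_mono strict_mono_mono)
  then have "L -` {k<..} \<inter> space borel \<in> sets borel" by (rule measurable_sets) auto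
  then show ?thesis by (simp add: vimage_def)
qed

lemma AM_lim:
  fixes L F :: "real \<Rightarrow> real" and k :: "nat \<Rightarrow> real"
  assumes L: "strict_mono L" and F: "integrable lborel F"
    and I: "I \<in> borel_measurable borel"
    and lim: "AE g in lborel. (\<lambda>n. indicator {g. L g > k n} g :: real) \<longlonglongrightarrow> I g"
  shows "(\<lambda>n. AM L F (k n)) \<longlonglongrightarrow> (\<integral>g. I g * F g \<partial>lborel)"
  unfolding AM_def
proof (rule integral_dominated_convergence[where w="\<lambda>g. norm (F g)"])
  have Fm: "F \<in> borel_measurable lborel" using F by auto
  show "(\<lambda>g. I g * F g) \<in> borel_measurable lborel" using I Fm by simp
  show "\<And>n. (\<lambda>g. indicator {g. L g > k n} g * F g) \<in> borel_measurable lborel"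
    using up_sets[OF L] Fm by (intro borel_measurable_times borel_measurable_indicator) auto
  show "integrable lborel (\<lambda>g. norm (F g))" using F by auto
  show "AE g in lborel. (\<lambda>n. indicator {g. L g > k n} g * F g) \<longlonglongrightarrow> I g * F g"
    using lim by eventually_elim (intro tendsto_intros)
  show "\<And>n. AE g in lborel. norm (indicator {g. L g > k n} g * F g) \<le> norm (F g)"
    by (auto simp: indicator_def)
qed

lemma AM_cont:
  fixes L F K :: "real \<Rightarrow> real"
  assumes L: "strict_mono L" and F: "integrable lborel F" and K: "isCont K t0"
  shows "isCont (\<lambda>t. AM L F (K t)) t0"
proof (rule continuous_at_sequentiallyI)
  fix u :: "nat \<Rightarrow> real" assume u: "u \<longlonglongrightarrow> t0"
  have Ku: "(\<lambda>n. K (u n)) \<longlonglongrightarrow> K t0" using K u isCont_tendsto_compose by blast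
  have cnt: "countable {g. L g = K t0}"
  proof (rule countable_subset)
    show "{g. L g = K t0} \<subseteq> (\<lambda>_. SOME g. L g = K t0) ` {()}"
    proof safe
      fix x assume x: "L x = K t0"
      then have "L (SOME g. L g = K t0) = K t0" by (rule someI)
      with x L have "L x = L (SOME g. L g = K t0)" by simp
      with L show "x \<in> (\<lambda>_. SOME g. L g = K t0) ` {()}" by (simp add: strict_mono_eq)
    qed
  qed auto
  have ae: "AE g in lborel. g \<notin> {g. L g = K t0}"
    by (intro AE_not_in countable_imp_null_set_lborel cnt)
  have "AE g in lborel. (\<lambda>n. indicator {g. L g > K (u n)} g :: real) \<longlonglongrightarrow> indicator {g. L g > K t0} g"
    using ae
  proof eventually_elim
    case (elim g)
    show ?case
    proof (cases "L g > K t0")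
      case True
      then have "\<forall>\<^sub>F n in sequentially. K (u n) < L g" using Ku order_tendstoD(2) by blast
      then have "\<forall>\<^sub>F n in sequentially. (indicator {g. L g > K (u n)} g :: real) = 1"
        by eventually_elim auto
      then show ?thesis using True by (simp add: tendsto_eventually)
    next
      case False
      then have "L g < K t0" using elim by auto
      then have "\<forall>\<^sub>F n in sequentially. K (u n) > L g" using Ku order_tendstoD(1) by blast
      then have "\<forall>\<^sub>F n in sequentially. (indicator {g. L g > K (u n)} g :: real) = 0"
        by eventually_elim auto
      then show ?thesis using False by (simp add: tendsto_eventually)
    qed
  qed
  from AM_lim[OF L F _ this] show "(\<lambda>n. AM L F (K (u n))) \<longlonglongrightarrow> AM L F (K t0)"
    unfolding AM_def using up_sets[OF L] by simp
qed

lemma frac_lt: fixes X Y D1 D2 :: real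
  assumes "0 < D1" "0 < D2" "X * D1 < Y * D2" shows "X / D2 < Y / D1"
proof -
  have "X / D2 = (X * D1) / (D1 * D2)" using assms by simp
  also have "\<dots> < (Y * D2) / (D1 * D2)" using assms by (intro divide_strict_right_mono) auto
  also have "\<dots> = Y / D1" using assms by simp
  finally show ?thesis .
qed

lemma pos_int:
  fixes F :: "real \<Rightarrow> real"
  assumes F: "integrable lborel F" and S: "S \<in> sets lborel"
    and pos: "\<And>x. x \<in> S \<Longrightarrow> F x > 0" and sub: "{a..a+1} \<subseteq> S"
  shows "(\<integral>x. indicator S x * F x \<partial>lborel) > 0"
proof -
  have int: "integrable lborel (\<lambda>x. indicator S x * F x)"
    using integrable_real_mult_indicator[OF _ F, of S] S by (simp add: mult.commute)
  have nn: "AE x in lborel. 0 \<le> indicator S x * F x"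
    using pos by (auto simp: indicator_def less_imp_le)
  have ge: "(\<integral>x. indicator S x * F x \<partial>lborel) \<ge> 0"
    using nn by (intro integral_nonneg_AE)
  have "\<not> (AE x in lborel. indicator S x * F x = 0)"
  proof
    assume "AE x in lborel. indicator S x * F x = 0"
    then have "AE x in lborel. x \<notin> {a..a+1}"
      by eventually_elim (use pos sub in \<open>auto simp: indicator_def\<close>, fastforce)
    then have "emeasure lborel {a..a+1} = 0"
      by (subst (asm) AE_iff_measurable[of "{a..a+1}"]) auto
    then show False by simp
  qed
  then have "(\<integral>x. indicator S x * F x \<partial>lborel) \<noteq> 0"
    using integral_nonneg_eq_0_iff_AE[OF int nn] by simp
  with ge show ?thesis by simp
qed

context
  fixes L fq fu :: "real \<Rightarrow> real"
  assumes Lm: "strict_mono L" and qi: "integrable lborel fq" and ui: "integrable lborel fu"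
    and qp: "\<And>g. fq g > 0" and up: "\<And>g. fu g > 0"
    and Ldef: "\<And>g. L g = fq g / fu g"
    and Lunb: "\<not> bdd_above (range L)"
    and Linf: "(INF g. L g) = 0"
begin

lemma acc_half: "\<exists>a. {a..} \<subseteq> {g. L g > k}"
proof -
  obtain g1 where "L g1 > k" using Lunb by (meson bdd_aboveI2 not_le_imp_less rangeI)
  then have "{g1..} \<subseteq> {g. L g > k}" using Lm
    by (auto dest!: strict_mono_mono[THEN monoD] intro: order.strict_trans2)
  then show ?thesis by blast
qed

lemma rej_half: assumes "k > 0" shows "\<exists>a. {..a} \<subseteq> {g. \<not> L g > k}"
proof -
  have bb: "bdd_below (range L)" using qp up Ldef
    by (intro bdd_belowI2[of _ 0]) (simp add: less_imp_le)
  have "(INF g. L g) < k" using Linf assms by simp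
  then obtain g2 where "L g2 < k" using cInf_lessD[of "range L" k] by auto
  then have "{..g2} \<subseteq> {g. \<not> L g > k}" using Lm
    by (auto dest!: strict_mono_mono[THEN monoD] intro: order.strict_trans1)
  then show ?thesis by blast
qed

lemma S_sets: "{g. L g > k} \<in> sets lborel" using up_sets[OF Lm] by simp
lemma Sc_sets: "{g. \<not> L g > k} \<in> sets lborel"
proof -
  have "{g. \<not> L g > k} = UNIV - {g. L g > k}" by auto
  then show ?thesis using S_sets by simp
qed

lemma A_pos:
  assumes F: "integrable lborel F" and Fp: "\<And>g. F g > 0"
  shows "AM L F k > 0"
proof -
  obtain a where "{a..} \<subseteq> {g. L g > k}" using acc_half by blast
  then have "{a..a+1} \<subseteq> {g. L g > k}" by auto
  then show ?thesis unfolding AM_def using pos_int[OF F S_sets] Fp by blast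
qed

definition RM :: "(real \<Rightarrow> real) \<Rightarrow> real \<Rightarrow> real" where
  "RM F k = (\<integral>g. indicator {g. \<not> L g > k} g * F g \<partial>lborel)"

lemma R_pos:
  assumes F: "integrable lborel F" and Fp: "\<And>g. F g > 0" and k: "k > 0"
  shows "RM F k > 0"
proof -
  obtain a where "{..a} \<subseteq> {g. \<not> L g > k}" using rej_half[OF k] by blast
  then have "{a-1..a-1+1} \<subseteq> {g. \<not> L g > k}" by auto
  then show ?thesis unfolding RM_def using pos_int[OF F Sc_sets] Fp by blast
qed

lemma split_int:
  assumes F: "integrable lborel F"
  shows "(\<integral>g. F g \<partial>lborel) = AM L F k + RM F k"
proof -
  have i1: "integrable lborel (\<lambda>g. indicator {g. L g > k} g * F g)"
    using integrable_real_mult_indicator[OF S_sets F] by (simp add: mult.commute)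
  have i2: "integrable lborel (\<lambda>g. indicator {g. \<not> L g > k} g * F g)"
    using integrable_real_mult_indicator[OF Sc_sets F] by (simp add: mult.commute)
  have "(\<integral>g. F g \<partial>lborel) = (\<integral>g. indicator {g. L g > k} g * F g + indicator {g. \<not> L g > k} g * F g \<partial>lborel)"
    by (rule Bochner_Integration.integral_cong) (auto simp: indicator_def)
  also have "\<dots> = AM L F k + RM F k" unfolding AM_def RM_def using i1 i2 by simp
  finally show ?thesis .
qed

lemma A_gt: "AM L fq k > k * AM L fu k"
proof -
  have F: "integrable lborel (\<lambda>g. fq g - k * fu g)" using qi ui by auto
  obtain a where "{a..} \<subseteq> {g. L g > k}" using acc_half by blast
  then have sub: "{a..a+1} \<subseteq> {g. L g > k}" by auto
  have "\<And>g. g \<in> {g. L g > k} \<Longrightarrow> fq g - k * fu g > 0"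
    using up qp Ldef by (auto simp: less_divide_eq)
  from pos_int[OF F S_sets this sub]
  have "0 < (\<integral>g. indicator {g. L g > k} g * (fq g - k * fu g) \<partial>lborel)" .
  also have "\<dots> = (\<integral>g. indicator {g. L g > k} g * fq g - k * (indicator {g. L g > k} g * fu g) \<partial>lborel)"
    by (simp add: algebra_simps)
  also have "\<dots> = AM L fq k - k * AM L fu k"
  proof -
    have i1: "integrable lborel (\<lambda>g. indicator {g. L g > k} g * fq g)"
      using integrable_real_mult_indicator[OF S_sets qi] by (simp add: mult.commute)
    have i2: "integrable lborel (\<lambda>g. k * (indicator {g. L g > k} g * fu g))"
      using integrable_real_mult_indicator[OF S_sets ui] by (simp add: mult.commute)
    show ?thesis unfolding AM_def using Bochner_Integration.integral_diff[OF i1 i2] by simp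
  qed
  finally show ?thesis by simp
qed

lemma R_le: "RM fq k \<le> k * RM fu k"
proof -
  have "RM fq k \<le> (\<integral>g. indicator {g. \<not> L g > k} g * (k * fu g) \<partial>lborel)"
    unfolding RM_def
  proof (rule integral_mono)
    show "integrable lborel (\<lambda>g. indicator {g. \<not> L g > k} g * fq g)"
      using integrable_real_mult_indicator[OF Sc_sets qi] by (simp add: mult.commute)
    show "integrable lborel (\<lambda>g. indicator {g. \<not> L g > k} g * (k * fu g))"
      using integrable_real_mult_indicator[OF Sc_sets, of "\<lambda>g. k * fu g"] ui by (simp add: mult.commute)
    fix g show "indicator {g. \<not> L g > k} g * fq g \<le> indicator {g. \<not> L g > k} g * (k * fu g)"
      using up[of g] Ldef[of g] by (auto simp: indicator_def not_less pos_divide_le_eq mult.commute)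
  qed
  also have "\<dots> = k * RM fu k" unfolding RM_def by (simp add: algebra_simps)
  finally show ?thesis .
qed


lemma Lpos: "L g > 0" using qp up Ldef by simp

lemma AM_to_full: "(\<lambda>n. AM L F (1 / (real n + 1))) \<longlonglongrightarrow> (\<integral>g. F g \<partial>lborel)"
  if F: "integrable lborel F" for F
proof -
  have "AE g in lborel. (\<lambda>n. indicator {g. L g > 1 / (real n + 1)} g :: real) \<longlonglongrightarrow> 1"
  proof (rule AE_I2)
    fix g
    have "(\<lambda>n. 1 / (real n + 1)) \<longlonglongrightarrow> 0" 
      using LIMSEQ_inverse_real_of_nat by (simp add: inverse_eq_divide add.commute)
    then have "\<forall>\<^sub>F n in sequentially. 1 / (real n + 1) < L g" using Lpos order_tendstoD(2) by blast
    then have "\<forall>\<^sub>F n in sequentially. (indicator {g. L g > 1 / (real n + 1)} g :: real) = 1"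
      by eventually_elim auto
    then show "(\<lambda>n. indicator {g. L g > 1 / (real n + 1)} g :: real) \<longlonglongrightarrow> 1" by (simp add: tendsto_eventually)
  qed
  from AM_lim[OF Lm F _ this] show ?thesis by simp
qed

lemma AM_to_zero: "(\<lambda>n. AM L F (real n + 1)) \<longlonglongrightarrow> 0"
  if F: "integrable lborel F" for F
proof -
  have "AE g in lborel. (\<lambda>n. indicator {g. L g > real n + 1} g :: real) \<longlonglongrightarrow> 0"
  proof (rule AE_I2)
    fix g
    obtain N :: nat where "L g < real N" using reals_Archimedean2 by blast
    then have "\<forall>\<^sub>F n in sequentially. (indicator {g. L g > real n + 1} g :: real) = 0"
      unfolding eventually_sequentially by (intro exI[of _ N]) (auto simp: indicator_def)
    then show "(\<lambda>n. indicator {g. L g > real n + 1} g :: real) \<longlonglongrightarrow> 0" by (simp add: tendsto_eventually)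
  qed
  from AM_lim[OF Lm F _ this] show ?thesis by simp
qed

end

context
  fixes L fq fu :: "real \<Rightarrow> real" and pq :: real
  assumes Lm: "strict_mono L" and qi: "integrable lborel fq" and ui: "integrable lborel fu"
    and qp: "\<And>g. fq g > 0" and up: "\<And>g. fu g > 0"
    and Ldef: "\<And>g. L g = fq g / fu g"
    and Lunb: "\<not> bdd_above (range L)"
    and Linf: "(INF g. L g) = 0"
    and pq: "0 < pq" "pq < 1"
begin

definition "S1 k = pq * AM L fq k / (pq * AM L fq k + (1 - pq) * AM L fu k)"
definition "Phi0 = pq * (\<integral>g. fq g \<partial>lborel) / (pq * (\<integral>g. fq g \<partial>lborel) + (1 - pq) * (\<integral>g. fu g \<partial>lborel))"
definition "S2 k = (pq * AM L fq k + (1 - pq) * AM L fu k) / (pq * (\<integral>g. fq g \<partial>lborel) + (1 - pq) * (\<integral>g. fu g \<partial>lborel))"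

lemmas facts = A_pos[OF Lm qi ui qp up Ldef Lunb Linf] R_pos[OF Lm qi ui qp up Ldef Lunb Linf]
  split_int[OF Lm qi ui qp up Ldef Lunb Linf] A_gt[OF Lm qi ui qp up Ldef Lunb Linf]
  R_le[OF Lm qi ui qp up Ldef Lunb Linf]
  AM_to_full[OF Lm qi ui qp up Ldef Lunb Linf] AM_to_zero[OF Lm qi ui qp up Ldef Lunb Linf]

lemma Aq_pos: "AM L fq k > 0" using facts(1)[OF qi qp] .
lemma Au_pos: "AM L fu k > 0" using facts(1)[OF ui up] .

lemma S1_gt: assumes k: "k \<ge> 0" shows "S1 k > pq * k / (pq * k + (1 - pq))"
proof -
  have a: "AM L fq k > k * AM L fu k" by (rule facts(4))
  have p1: "pq * AM L fq k + (1 - pq) * AM L fu k > 0" using Aq_pos Au_pos pq by (simp add: add_pos_pos)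
  have p2: "pq * k + (1 - pq) > 0" using pq k by (simp add: add_nonneg_pos)
  have "pq * k * (pq * AM L fq k + (1 - pq) * AM L fu k) < pq * AM L fq k * (pq * k + (1 - pq))"
  proof -
    have "pq * (1 - pq) * (k * AM L fu k) < pq * (1 - pq) * AM L fq k"
      using a pq by (intro mult_strict_left_mono) auto
    then show ?thesis by (simp add: algebra_simps)
  qed
  then show ?thesis unfolding S1_def by (rule frac_lt[OF p1 p2])
qed


lemma Mq_pos: "(\<integral>g. fq g \<partial>lborel) > 0"
  using facts(3)[OF qi, of 1] Aq_pos[of 1] facts(2)[OF qi qp, of 1] by linarith
lemma Mu_pos: "(\<integral>g. fu g \<partial>lborel) > 0"
  using facts(3)[OF ui, of 1] Au_pos[of 1] facts(2)[OF ui up, of 1] by linarith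
lemma den_pos: "pq * (\<integral>g. fq g \<partial>lborel) + (1 - pq) * (\<integral>g. fu g \<partial>lborel) > 0"
  using Mq_pos Mu_pos pq by (simp add: add_pos_pos)

lemma S1_gt_phi: assumes k: "k > 0" shows "S1 k > Phi0"
proof -
  define Aq Au Rq Ru where "Aq = AM L fq k" "Au = AM L fu k" "Rq = RM L fq k" "Ru = RM L fu k"
  have Mq: "(\<integral>g. fq g \<partial>lborel) = Aq + Rq" unfolding Aq_Au_Rq_Ru_def by (rule facts(3)[OF qi])
  have Mu: "(\<integral>g. fu g \<partial>lborel) = Au + Ru" unfolding Aq_Au_Rq_Ru_def by (rule facts(3)[OF ui])
  have aq: "Aq > 0" "Au > 0" unfolding Aq_Au_Rq_Ru_def using Aq_pos Au_pos by auto
  have ru: "Ru > 0" unfolding Aq_Au_Rq_Ru_def by (rule facts(2)[OF ui up k])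
  have gt: "Aq > k * Au" unfolding Aq_Au_Rq_Ru_def by (rule facts(4))
  have le: "Rq \<le> k * Ru" unfolding Aq_Au_Rq_Ru_def by (rule facts(5))
  have key: "Aq * Ru > Rq * Au"
  proof -
    have "Aq * Ru > k * Au * Ru" using gt ru by (simp add: mult_strict_right_mono)
    moreover have "Rq * Au \<le> k * Ru * Au" using le aq by (simp add: mult_right_mono)
    ultimately show ?thesis by (simp add: algebra_simps)
  qed
  have d1: "pq * Aq + (1 - pq) * Au > 0" using aq pq by (simp add: add_pos_pos)
  have d2: "pq * (Aq + Rq) + (1 - pq) * (Au + Ru) > 0" using den_pos Mq Mu by simp
  have "pq * (Aq + Rq) * (pq * Aq + (1 - pq) * Au) < pq * Aq * (pq * (Aq + Rq) + (1 - pq) * (Au + Ru))"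
  proof -
    have "pq * (1 - pq) * (Rq * Au) < pq * (1 - pq) * (Aq * Ru)"
      using key pq by (intro mult_strict_left_mono) auto
    then show ?thesis by (simp add: algebra_simps)
  qed
  then show ?thesis unfolding S1_def Phi0_def Mq Mu Aq_Au_Rq_Ru_def[symmetric] 
    by (rule frac_lt[OF d1 d2])
qed

lemma S1_cont: fixes K :: "real \<Rightarrow> real" assumes "isCont K t0" shows "isCont (\<lambda>t. S1 (K t)) t0"
proof -
  have c1: "isCont (\<lambda>t. AM L fq (K t)) t0" "isCont (\<lambda>t. AM L fu (K t)) t0"
    using AM_cont[OF Lm qi assms] AM_cont[OF Lm ui assms] .
  have "pq * AM L fq (K t0) + (1 - pq) * AM L fu (K t0) \<noteq> 0"
    using Aq_pos Au_pos pq by (smt (verit) mult_pos_pos)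
  then show ?thesis unfolding S1_def
    by (intro isCont_divide isCont_add isCont_mult continuous_const c1)
qed

lemma S2_cont: fixes K :: "real \<Rightarrow> real" assumes "isCont K t0" shows "isCont (\<lambda>t. S2 (K t)) t0"
proof -
  have c1: "isCont (\<lambda>t. AM L fq (K t)) t0" "isCont (\<lambda>t. AM L fu (K t)) t0"
    using AM_cont[OF Lm qi assms] AM_cont[OF Lm ui assms] .
  then show ?thesis unfolding S2_def using den_pos
    by (intro isCont_divide isCont_add isCont_mult continuous_const c1) auto
qed

lemma S1_lim: "(\<lambda>n. S1 (1 / (real n + 1))) \<longlonglongrightarrow> Phi0"
  unfolding S1_def Phi0_def
  by (intro tendsto_divide tendsto_add tendsto_mult tendsto_const facts(6)[OF qi] facts(6)[OF ui]) (use den_pos in simp)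

lemma S2_lim1: "(\<lambda>n. S2 (1 / (real n + 1))) \<longlonglongrightarrow> 1"
proof -
  have "(\<lambda>n. S2 (1 / (real n + 1))) \<longlonglongrightarrow>
     (pq * (\<integral>g. fq g \<partial>lborel) + (1 - pq) * (\<integral>g. fu g \<partial>lborel)) / (pq * (\<integral>g. fq g \<partial>lborel) + (1 - pq) * (\<integral>g. fu g \<partial>lborel))"
    unfolding S2_def by (intro tendsto_divide tendsto_add tendsto_mult tendsto_const facts(6)[OF qi] facts(6)[OF ui]) (use den_pos in simp)
  then show ?thesis using den_pos by simp
qed

lemma S2_lim0: "(\<lambda>n. S2 (real n + 1)) \<longlonglongrightarrow> 0"
proof -
  have "(\<lambda>n. S2 (real n + 1)) \<longlonglongrightarrow>
     (pq * 0 + (1 - pq) * 0) / (pq * (\<integral>g. fq g \<partial>lborel) + (1 - pq) * (\<integral>g. fu g \<partial>lborel))"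
    unfolding S2_def by (intro tendsto_divide tendsto_add tendsto_mult tendsto_const facts(7)[OF qi] facts(7)[OF ui]) (use den_pos in simp)
  then show ?thesis by simp
qed

end



lemma netv_gt: assumes "0 < xq" "0 < xu"
  shows "netv xq xu s > c \<longleftrightarrow> s > beta xq xu c"
proof -
  have "netv xq xu s = s * (xq + xu) - xu" unfolding netv_def by (simp add: algebra_simps)
  moreover have "s > beta xq xu c \<longleftrightarrow> s * (xq + xu) > xu + c"
    unfolding beta_def using assms by (simp add: divide_less_eq)
  ultimately show ?thesis by auto
qed

lemma reg_cont:
  fixes s :: "real \<Rightarrow> real"
  assumes xp: "0 < xq" "0 < xu" and s: "isCont s t0" and gt: "s t0 > beta xq xu c"
  shows "isCont (\<lambda>t. regret xq xu c Q (s t)) t0"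
proof -
  obtain d where d: "d > 0" "\<And>t. dist t t0 < d \<Longrightarrow> dist (s t) (s t0) < s t0 - beta xq xu c"
    using s gt unfolding continuous_at_eps_delta by (meson diff_gt_0_iff_gt)
  have ev: "eventually (\<lambda>t. regret xq xu c Q (s t) = netv xq xu (s t) - (Q * xq - (1 - Q) * xu)) (nhds t0)"
    unfolding eventually_nhds_metric
  proof (intro exI[of _ d] conjI allI impI)
    fix t assume "dist t t0 < d"
    then have "dist (s t) (s t0) < s t0 - beta xq xu c" by (rule d(2))
    then have "s t > beta xq xu c" by (simp add: dist_real_def abs_if split: if_splits)
    then show "regret xq xu c Q (s t) = netv xq xu (s t) - (Q * xq - (1 - Q) * xu)"
      unfolding regret_def payoff_def accept'_def using netv_gt[OF xp] by simp
  qed fact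
  have "isCont (\<lambda>t. netv xq xu (s t) - (Q * xq - (1 - Q) * xu)) t0"
    unfolding netv_def using s by (intro continuous_intros)
  then show ?thesis using isCont_cong[OF ev] by simp
qed

lemma reg_disc:
  fixes s :: "real \<Rightarrow> real"
  assumes xp: "0 < xq" "0 < xu" and Q: "Q = 0 \<or> Q = 1" and s: "isCont s t0"
    and le: "s t0 \<le> beta xq xu c"
    and near: "\<And>e. e > 0 \<Longrightarrow> \<exists>t. dist t t0 < e \<and> s t > beta xq xu c"
  shows "\<not> isCont (\<lambda>t. regret xq xu c Q (s t)) t0"
proof
  assume R: "isCont (\<lambda>t. regret xq xu c Q (s t)) t0"
  define D where "D = Q * xq - (1 - Q) * xu"
  have D: "\<bar>D\<bar> > 0" using Q xp unfolding D_def by auto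
  have P: "isCont (\<lambda>t. netv xq xu (s t) - regret xq xu c Q (s t)) t0"
    unfolding netv_def using s R by (intro continuous_intros)
  have Peq: "\<And>t. netv xq xu (s t) - regret xq xu c Q (s t) = (if s t > beta xq xu c then D else 0)"
    unfolding regret_def payoff_def accept'_def D_def using netv_gt[OF xp] by simp
  obtain d where d: "d > 0" "\<And>t. dist t t0 < d \<Longrightarrow>
      dist (netv xq xu (s t) - regret xq xu c Q (s t)) (netv xq xu (s t0) - regret xq xu c Q (s t0)) < \<bar>D\<bar>"
    using P D unfolding continuous_at_eps_delta by blast
  obtain t where t: "dist t t0 < d" "s t > beta xq xu c" using near[OF d(1)] by blast
  from d(2)[OF t(1)] show False using t(2) le by (simp add: Peq dist_real_def)
qed

lemma jump:
  fixes g :: "real \<Rightarrow> real"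
  assumes ab: "a \<le> b" and cont: "\<And>t. t \<in> {a..b} \<Longrightarrow> isCont g t"
    and ga: "g a \<le> B" and gb: "g b > B"
  shows "\<exists>t0\<in>{a..b}. g t0 \<le> B \<and> (\<forall>e>0. \<exists>t. dist t t0 < e \<and> g t > B)"
proof -
  define S where "S = {a..b} \<inter> g -` {..B}"
  have co: "continuous_on {a..b} g" using cont by (intro continuous_at_imp_continuous_on) auto
  have cl: "closed S" unfolding S_def by (intro continuous_closed_preimage co) auto
  have ne: "S \<noteq> {}" using ga ab unfolding S_def by auto
  have bd: "bdd_above S" unfolding S_def by (intro bdd_aboveI[of _ b]) auto
  define t0 where "t0 = Sup S"
  have t0S: "t0 \<in> S" unfolding t0_def using closed_contains_Sup[OF ne bd cl] .
  then have t0: "t0 \<in> {a..b}" "g t0 \<le> B" unfolding S_def by auto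
  have nb: "t0 \<noteq> b" using t0 gb by auto
  have right: "g t > B" if "t0 < t" "t \<le> b" for t
  proof (rule ccontr)
    assume "\<not> g t > B"
    then have "t \<in> S" using that t0 unfolding S_def by auto
    then have "t \<le> t0" unfolding t0_def using bd by (rule cSup_upper)
    with that show False by simp
  qed
  have "\<forall>e>0. \<exists>t. dist t t0 < e \<and> g t > B"
  proof (intro allI impI)
    fix e :: real assume e: "e > 0"
    define m where "m = min e (b - t0)"
    define t where "t = t0 + m / 2"
    have m: "0 < m" "m \<le> e" "m \<le> b - t0" using e t0 nb unfolding m_def by auto
    have "t0 < t" "t \<le> b" "dist t t0 < e" using m unfolding t_def dist_real_def by auto
    then show "\<exists>t. dist t t0 < e \<and> g t > B" using right by blast
  qed
  with t0 show ?thesis by blast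
qed

lemma jump':
  fixes g :: "real \<Rightarrow> real"
  assumes ab: "a \<le> b" and cont: "\<And>t. t \<in> {a..b} \<Longrightarrow> isCont g t"
    and ga: "g a > B" and gb: "g b \<le> B"
  shows "\<exists>t0\<in>{a..b}. g t0 \<le> B \<and> (\<forall>e>0. \<exists>t. dist t t0 < e \<and> g t > B)"
proof -
  define S where "S = {a..b} \<inter> g -` {..B}"
  have co: "continuous_on {a..b} g" using cont by (intro continuous_at_imp_continuous_on) auto
  have cl: "closed S" unfolding S_def by (intro continuous_closed_preimage co) auto
  have ne: "S \<noteq> {}" using gb ab unfolding S_def by auto
  have bd: "bdd_below S" unfolding S_def by (intro bdd_belowI[of _ a]) auto
  define t0 where "t0 = Inf S"
  have t0S: "t0 \<in> S" unfolding t0_def using closed_contains_Inf[OF ne bd cl] .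
  then have t0: "t0 \<in> {a..b}" "g t0 \<le> B" unfolding S_def by auto
  have nb: "t0 \<noteq> a" using t0 ga by auto
  have left: "g t > B" if "t < t0" "a \<le> t" for t
  proof (rule ccontr)
    assume "\<not> g t > B"
    then have "t \<in> S" using that t0 unfolding S_def by auto
    then have "t0 \<le> t" unfolding t0_def using bd by (rule cInf_lower)
    with that show False by simp
  qed
  have "\<forall>e>0. \<exists>t. dist t t0 < e \<and> g t > B"
  proof (intro allI impI)
    fix e :: real assume e: "e > 0"
    define m where "m = min e (t0 - a)"
    define t where "t = t0 - m / 2"
    have m: "0 < m" "m \<le> e" "m \<le> t0 - a" using e t0 nb unfolding m_def by auto
    have "t < t0" "a \<le> t" "dist t t0 < e" using m unfolding t_def dist_real_def by auto
    then show "\<exists>t. dist t t0 < e \<and> g t > B" using left by blast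
  qed
  with t0 show ?thesis by blast
qed

lemma jump2:
  fixes g :: "real \<Rightarrow> real"
  assumes I: "\<And>t. t \<in> {a..b} \<union> {b..a} \<Longrightarrow> isCont g t"
    and ga: "g a > B" and gb: "g b \<le> B"
  shows "\<exists>t0\<in>{a..b} \<union> {b..a}. g t0 \<le> B \<and> (\<forall>e>0. \<exists>t. dist t t0 < e \<and> g t > B)"
proof (cases "a \<le> b")
  case True
  from jump'[OF True _ ga gb] I show ?thesis by blast
next
  case False
  then have "b \<le> a" by simp
  from jump[OF this _ gb ga] I show ?thesis by blast
qed


theorem mainTheorem8:
  fixes pq xq xu c theta Q :: real
    and hq hu :: "real \<times> real \<Rightarrow> real"
  assumes prior: "0 < pq" "pq < 1"
    and pay: "0 < xq" "0 < xu"
    and cut: "- xu < c" "c < xq"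
    and Q: "Q = 0 \<or> Q = 1"
    and pos: "\<And>p. 0 < hq p" "\<And>p. 0 < hu p"
    and meas: "hq \<in> borel_measurable borel" "hu \<in> borel_measurable borel"
    and dens: "integrable lborel hq" "integral\<^sup>L lborel hq = 1"
              "integrable lborel hu" "integral\<^sup>L lborel hu = 1"
    and lcont: "continuous_on UNIV (lr hq hu)"
    and lmono1: "\<And>g. strict_mono (\<lambda>t. lr hq hu (t, g))"
    and lmono2: "\<And>t. strict_mono (\<lambda>g. lr hq hu (t, g))"
    and linf: "\<And>t. (INF g. lr hq hu (t, g)) = 0"
    and lsup: "\<And>t. \<not> bdd_above (range (\<lambda>g. lr hq hu (t, g)))"
    and sect: "integrable lborel (\<lambda>g. hq (theta, g))" "integrable lborel (\<lambda>g. hu (theta, g))"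
  shows "((\<exists>t\<in>{-xu<..<xq}. \<not> isCont (\<lambda>t. regret xq xu c Q (s1 pq hq hu xq xu theta t)) t)
           \<longleftrightarrow> phi pq hq hu theta < beta xq xu c)
       \<and> (\<exists>t\<in>{-xu<..<xq}. \<not> isCont (\<lambda>t. regret xq xu c Q (s2 pq hq hu xq xu theta t)) t)"
proof -
  define L where "L = (\<lambda>g. lr hq hu (theta, g))"
  define fq where "fq = (\<lambda>g. hq (theta, g))"
  define fu where "fu = (\<lambda>g. hu (theta, g))"
  have Lm: "strict_mono L" using lmono2 unfolding L_def .
  have qi: "integrable lborel fq" using sect(1) unfolding fq_def .
  have ui: "integrable lborel fu" using sect(2) unfolding fu_def .
  have qp: "\<And>g. fq g > 0" using pos(1) unfolding fq_def by simp
  have up: "\<And>g. fu g > 0" using pos(2) unfolding fu_def by simp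
  have Ldef: "\<And>g. L g = fq g / fu g" unfolding L_def fq_def fu_def lr_def by simp
  have Lunb: "\<not> bdd_above (range L)" using lsup unfolding L_def .
  have Linf: "(INF g. L g) = 0" using linf unfolding L_def .
  note A = Lm qi ui qp up Ldef Lunb Linf prior
  define thrf where "thrf = thr pq xq xu"
  have s1eq: "\<And>t. s1 pq hq hu xq xu theta t = S1 L fq fu pq (thrf t)"
    unfolding S1_def[OF A] AM_def unfolding s1_def acc_mass_def L_def fq_def fu_def thrf_def Let_def ..
  have s2eq: "\<And>t. s2 pq hq hu xq xu theta t = S2 L fq fu pq (thrf t)"
    unfolding S2_def[OF A] AM_def unfolding s2_def acc_mass_def L_def fq_def fu_def thrf_def marg_def Let_def ..
  have phieq: "phi pq hq hu theta = Phi0 fq fu pq"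
    unfolding Phi0_def[OF A] unfolding phi_def marg_def fq_def fu_def ..
  define I where "I = {-xu<..<xq}"
  have thr_pos: "thrf t > 0" if "t \<in> I" for t
    using that prior unfolding I_def thrf_def thr_def by (intro divide_pos_pos mult_pos_pos) auto
  have thr_cont: "isCont thrf t" if "t \<in> I" for t
  proof -
    have "pq * (xq - t) \<noteq> 0" using that prior unfolding I_def by auto
    then show ?thesis unfolding thrf_def thr_def
      by (intro isCont_divide isCont_mult isCont_add isCont_diff continuous_const continuous_ident)
  qed
  define tinv where "tinv k = (pq * k * xq - (1 - pq) * xu) / (pq * k + (1 - pq))" for k
  have tinv: "tinv k \<in> I \<and> thrf (tinv k) = k" if k: "k > 0" for k
  proof -
    define D where "D = pq * k + (1 - pq)"
    have D: "D > 0" unfolding D_def using k prior by (simp add: add_pos_pos)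
    have e1: "xu + tinv k = pq * k * (xq + xu) / D"
      unfolding tinv_def D_def[symmetric] using D by (simp add: field_simps D_def)
    have e2: "xq - tinv k = (1 - pq) * (xq + xu) / D"
      unfolding tinv_def D_def[symmetric] using D by (simp add: field_simps D_def)
    have p1: "xu + tinv k > 0" unfolding e1 using D k prior pay by simp
    have p2: "xq - tinv k > 0" unfolding e2 using D k prior pay by simp
    have "thrf (tinv k) = (1 - pq) * (pq * k * (xq + xu) / D) / (pq * ((1 - pq) * (xq + xu) / D))"
      unfolding thrf_def thr_def e1 e2 ..
    also have "\<dots> = k"
    proof -
      define Z where "Z = pq * ((1 - pq) * (xq + xu) / D)"
      have Z: "Z > 0" unfolding Z_def using D prior pay by simp
      have "(1 - pq) * (pq * k * (xq + xu) / D) = k * Z" unfolding Z_def by simp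
      then show ?thesis using Z unfolding Z_def[symmetric] by simp
    qed
    finally show ?thesis using p1 p2 unfolding I_def by auto
  qed
  have key_frac: "pq * thrf t / (pq * thrf t + (1 - pq)) = (xu + t) / (xq + xu)" if t: "t \<in> I" for t
  proof -
    have u: "xu + t > 0" and v: "xq - t > 0" using t unfolding I_def by auto
    have "pq * thrf t = (1 - pq) * (xu + t) / (xq - t)" unfolding thrf_def thr_def using prior by simp
    then have "pq * thrf t / (pq * thrf t + (1 - pq)) =
       ((1 - pq) * (xu + t) / (xq - t)) / ((1 - pq) * (xu + t) / (xq - t) + (1 - pq))" by (simp only:)
    also have "(1 - pq) * (xu + t) / (xq - t) + (1 - pq) = (1 - pq) * (xq + xu) / (xq - t)"
      using v by (simp add: field_simps)
    also have "((1 - pq) * (xu + t) / (xq - t)) / ((1 - pq) * (xq + xu) / (xq - t)) = (xu + t) / (xq + xu)"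
      using v prior by simp
    finally show ?thesis .
  qed
  have beta_eq: "beta xq xu c = (xu + c) / (xq + xu)" unfolding beta_def ..
  have cI: "c \<in> I" using cut unfolding I_def by auto
  have s1c: "isCont (\<lambda>t. s1 pq hq hu xq xu theta t) t" if "t \<in> I" for t
    unfolding s1eq by (rule S1_cont[OF A thr_cont[OF that]])
  have s2c: "isCont (\<lambda>t. s2 pq hq hu xq xu theta t) t" if "t \<in> I" for t
    unfolding s2eq by (rule S2_cont[OF A thr_cont[OF that]])
  have Isub: "{a..b} \<union> {b..a} \<subseteq> I" if "a \<in> I" "b \<in> I" for a b
    using that unfolding I_def by auto
  have part1: "(\<exists>t\<in>I. \<not> isCont (\<lambda>t. regret xq xu c Q (s1 pq hq hu xq xu theta t)) t)
           \<longleftrightarrow> phi pq hq hu theta < beta xq xu c"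
  proof
    assume "\<exists>t\<in>I. \<not> isCont (\<lambda>t. regret xq xu c Q (s1 pq hq hu xq xu theta t)) t"
    then obtain t where t: "t \<in> I" "\<not> isCont (\<lambda>t. regret xq xu c Q (s1 pq hq hu xq xu theta t)) t" by blast
    show "phi pq hq hu theta < beta xq xu c"
    proof (rule ccontr)
      assume "\<not> phi pq hq hu theta < beta xq xu c"
      then have "beta xq xu c \<le> Phi0 fq fu pq" using phieq by simp
      also have "Phi0 fq fu pq < s1 pq hq hu xq xu theta t"
        unfolding s1eq by (rule S1_gt_phi[OF A thr_pos[OF t(1)]])
      finally have "s1 pq hq hu xq xu theta t > beta xq xu c" .
      from reg_cont[OF pay s1c[OF t(1)] this] t(2) show False by simp
    qed
  next
    assume lt: "phi pq hq hu theta < beta xq xu c"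
    have "\<forall>\<^sub>F n in sequentially. S1 L fq fu pq (1 / (real n + 1)) < beta xq xu c"
      using order_tendstoD(2)[OF S1_lim[OF A]] lt phieq by simp
    then obtain n where n: "S1 L fq fu pq (1 / (real n + 1)) < beta xq xu c"
      unfolding eventually_sequentially by blast
    define p where "p = tinv (1 / (real n + 1))"
    have p: "p \<in> I" "thrf p = 1 / (real n + 1)" using tinv[of "1 / (real n + 1)"] unfolding p_def by auto
    have sp: "s1 pq hq hu xq xu theta p \<le> beta xq xu c" using n p(2) unfolding s1eq by simp
    have sc: "s1 pq hq hu xq xu theta c > beta xq xu c"
      using S1_gt[OF A less_imp_le[OF thr_pos[OF cI]]] key_frac[OF cI] beta_eq
      unfolding s1eq by simp
    obtain t0 where t0: "t0 \<in> {c..p} \<union> {p..c}" "s1 pq hq hu xq xu theta t0 \<le> beta xq xu c"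
      "\<forall>e>0. \<exists>t. dist t t0 < e \<and> s1 pq hq hu xq xu theta t > beta xq xu c"
      using jump2[of c p "s1 pq hq hu xq xu theta" "beta xq xu c"] sc sp s1c Isub[OF cI p(1)]
      by blast
    have t0I: "t0 \<in> I" using t0(1) Isub[OF cI p(1)] by blast
    have "\<not> isCont (\<lambda>t. regret xq xu c Q (s1 pq hq hu xq xu theta t)) t0"
      using reg_disc[OF pay Q s1c[OF t0I] t0(2)] t0(3) by blast
    then show "\<exists>t\<in>I. \<not> isCont (\<lambda>t. regret xq xu c Q (s1 pq hq hu xq xu theta t)) t"
      using t0I by blast
  qed
  have b1: "beta xq xu c < 1" unfolding beta_eq using cut pay by (simp add: divide_less_eq)
  have b0: "beta xq xu c > 0" unfolding beta_eq using cut pay by (simp add: divide_pos_pos)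
  have part2: "\<exists>t\<in>I. \<not> isCont (\<lambda>t. regret xq xu c Q (s2 pq hq hu xq xu theta t)) t"
  proof -
    have "\<forall>\<^sub>F n in sequentially. S2 L fq fu pq (1 / (real n + 1)) > beta xq xu c"
      using order_tendstoD(1)[OF S2_lim1[OF A] b1] by simp
    then obtain n where n: "S2 L fq fu pq (1 / (real n + 1)) > beta xq xu c"
      unfolding eventually_sequentially by blast
    have "\<forall>\<^sub>F n in sequentially. S2 L fq fu pq (real n + 1) < beta xq xu c"
      using order_tendstoD(2)[OF S2_lim0[OF A] b0] by simp
    then obtain m where m: "S2 L fq fu pq (real m + 1) < beta xq xu c"
      unfolding eventually_sequentially by blast
    define a where "a = tinv (1 / (real n + 1))"
    have a: "a \<in> I" "thrf a = 1 / (real n + 1)" using tinv[of "1 / (real n + 1)"] unfolding a_def by auto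
    define b where "b = tinv (real m + 1)"
    have b: "b \<in> I" "thrf b = real m + 1" using tinv[of "real m + 1"] unfolding b_def by auto
    have sa: "s2 pq hq hu xq xu theta a > beta xq xu c" using n a(2) unfolding s2eq by simp
    have sb: "s2 pq hq hu xq xu theta b \<le> beta xq xu c" using m b(2) unfolding s2eq by simp
    obtain t0 where t0: "t0 \<in> {a..b} \<union> {b..a}" "s2 pq hq hu xq xu theta t0 \<le> beta xq xu c"
      "\<forall>e>0. \<exists>t. dist t t0 < e \<and> s2 pq hq hu xq xu theta t > beta xq xu c"
      using jump2[of a b "s2 pq hq hu xq xu theta" "beta xq xu c"] sa sb s2c Isub[OF a(1) b(1)]
      by blast
    have t0I: "t0 \<in> I" using t0(1) Isub[OF a(1) b(1)] by blast
    have "\<not> isCont (\<lambda>t. regret xq xu c Q (s2 pq hq hu xq xu theta t)) t0"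
      using reg_disc[OF pay Q s2c[OF t0I] t0(2)] t0(3) by blast
    then show ?thesis using t0I by blast
  qed
  show ?thesis using part1 part2 unfolding I_def by blast
qed

end
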